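(* Let $M$ be a finitary matroid on $E$, $B$ a base of $M$, and $H\subseteq E\setminus B$ such that $\kappa:=|H|$ is an uncountable regular cardinal. Suppose there is $B'\subseteq B$ with $|B'|<\kappa$ such that $C_M(e,B)\cap B'\neq\emptyset$ for every $e\in H$. Then there exist $e^*\in H$ and a $\Delta$-system $\mathcal{D}$ of $\kappa$ many circuits of $M$ with kernel $K$ such that $\bigcup\mathcal{D}\subseteq\bigcup_{e\in H}C_M(e,B)$ and $e^*\in K\subseteq C_M(e^*,B)\setminus B'$.
   Context: $C_M(e,B)$ is the fundamental circuit of $e\notin B$ on the base $B$ (the unique circuit in $B\cup\{e\}$). A $\Delta$-system is a family of (at least two) sets any two of which have the same intersection $K$, called its kernel; the sets $C\setminus K$ for members $C$ are its petals. *)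

theory Defs
  imports "HOL-Library.Countable_Set"
begin

definition finitary_matroid :: "'a set \<Rightarrow> ('a set \<Rightarrow> bool) \<Rightarrow> bool" where
  "finitary_matroid E indep \<longleftrightarrow>
     (\<forall>I. indep I \<longrightarrow> I \<subseteq> E) \<and>
     indep {} \<and>
     (\<forall>I J. indep J \<and> I \<subseteq> J \<longrightarrow> indep I) \<and>
     (\<forall>I J. finite I \<and> finite J \<and> indep I \<and> indep J \<and> card I < card J
        \<longrightarrow> (\<exists>x\<in>J - I. indep (insert x I))) \<and>
     (\<forall>I. I \<subseteq> E \<and> (\<forall>F. F \<subseteq> I \<and> finite F \<longrightarrow> indep F) \<longrightarrow> indep I)"

definition is_base :: "('a set \<Rightarrow> bool) \<Rightarrow> 'a set \<Rightarrow> bool" where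
  "is_base indep B \<longleftrightarrow> indep B \<and> (\<forall>I. indep I \<and> B \<subseteq> I \<longrightarrow> I = B)"

definition is_circuit :: "'a set \<Rightarrow> ('a set \<Rightarrow> bool) \<Rightarrow> 'a set \<Rightarrow> bool" where
  "is_circuit E indep C \<longleftrightarrow> C \<subseteq> E \<and> \<not> indep C \<and> (\<forall>D. D \<subset> C \<longrightarrow> indep D)"

definition fund_circuit :: "'a set \<Rightarrow> ('a set \<Rightarrow> bool) \<Rightarrow> 'a \<Rightarrow> 'a set \<Rightarrow> 'a set" where
  "fund_circuit E indep e B = (THE C. is_circuit E indep C \<and> C \<subseteq> insert e B)"

definition delta_system :: "'a set set \<Rightarrow> 'a set \<Rightarrow> bool" where
  "delta_system D K \<longleftrightarrow> (\<exists>C1\<in>D. \<exists>C2\<in>D. C1 \<noteq> C2) \<and>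
     (\<forall>C1\<in>D. \<forall>C2\<in>D. C1 \<noteq> C2 \<longrightarrow> C1 \<inter> C2 = K)"

end

theory Submission
  imports Defs
begin

unbundle cardinal_syntax


locale kap =
  fixes K :: "'k set"
  assumes unc: "uncountable K" and reg: "regularCard |K|"
begin

abbreviation small :: "'b set \<Rightarrow> bool" where "small X \<equiv> |X| <o |K|"

lemma infK: "infinite K" using unc countable_finite by blast

lemma Cinf: "Cinfinite |K|"
  using infK by (simp add: cinfinite_def Field_card_of card_of_Card_order card_of_card_order_on)

lemma small_finite: "finite X \<Longrightarrow> small X"
  by (meson infK card_of_Well_order card_of_ordLeq_finite not_ordLeq_iff_ordLess)

lemma countable_card_of_nat': "countable A \<longleftrightarrow> |A| \<le>o |UNIV::nat set|"
  unfolding countable_def card_of_ordLeq[symmetric] by auto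

lemma small_countable: assumes "countable X" shows "small X"
proof -
  have "|X| \<le>o |UNIV::nat set|" using assms countable_card_of_nat' by blast
  moreover have "\<not> |K| \<le>o |UNIV::nat set|" using unc countable_card_of_nat' by blast
  hence "|UNIV::nat set| <o |K|" by (simp add: card_of_Well_order not_ordLeq_iff_ordLess)
  ultimately show ?thesis using ordLeq_ordLess_trans by blast
qed

lemma small_subset: "X \<subseteq> Y \<Longrightarrow> small Y \<Longrightarrow> small X"
  using card_of_mono1 ordLeq_ordLess_trans by blast

lemma small_image: "small X \<Longrightarrow> small (f ` X)"
  using card_of_image ordLeq_ordLess_trans by blast

lemma small_UN: "small I \<Longrightarrow> (\<And>i. i \<in> I \<Longrightarrow> small (A i)) \<Longrightarrow> small (\<Union>i\<in>I. A i)"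
  by (rule regularCard_UNION_bound[OF Cinf reg])

lemma small_Un: "small X \<Longrightarrow> small Y \<Longrightarrow> small (X \<union> Y)"
  by (rule card_of_Un_ordLess_infinite[OF infK])

lemma notsmall_ge: "\<not> small X \<Longrightarrow> |K| \<le>o |X|"
  by (simp add: card_of_Well_order not_ordLess_iff_ordLeq)

lemma notsmall_infinite: "\<not> small X \<Longrightarrow> infinite X"
  using small_finite by blast

lemma pigeon_fin:
  assumes "\<not> small A" "finite (f ` A)"
  shows "\<exists>y\<in>f ` A. \<not> small {x\<in>A. f x = y}"
proof (rule ccontr)
  assume a: "\<not> ?thesis"
  have "\<And>y. y \<in> f ` A \<Longrightarrow> small {x\<in>A. f x = y}" using a by blast
  hence "small (\<Union>y\<in>f ` A. {x\<in>A. f x = y})" by (rule small_UN[OF small_finite[OF assms(2)]])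
  moreover have "(\<Union>y\<in>f ` A. {x\<in>A. f x = y}) = A" by auto
  ultimately show False using assms(1) by simp
qed

lemma pigeon_nat:
  fixes f :: "'b \<Rightarrow> nat"
  assumes "\<not> small A"
  shows "\<exists>n. \<not> small {x\<in>A. f x = n}"
proof (rule ccontr)
  assume a: "\<not> ?thesis"
  have b: "\<And>y. y \<in> f ` A \<Longrightarrow> small {x\<in>A. f x = y}" using a by blast
  have c: "countable (f ` A)" by (rule countableI_type)
  have "small (\<Union>y\<in>f ` A. {x\<in>A. f x = y})" by (rule small_UN[OF small_countable[OF c] b])
  moreover have "(\<Union>y\<in>f ` A. {x\<in>A. f x = y}) = A" by auto
  ultimately show False using assms(1) by simp
qed

lemma disjoint_sub:
  assumes "\<And>A''. A'' \<subseteq> A \<Longrightarrow> small A'' \<Longrightarrow> \<exists>x\<in>A - A''. \<forall>y\<in>A''. f x \<inter> f y = {}"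
  shows "\<exists>A'\<subseteq>A. \<not> small A' \<and> (\<forall>x\<in>A'. \<forall>y\<in>A'. x \<noteq> y \<longrightarrow> f x \<inter> f y = {})"
proof -
  let ?F = "{A'. A' \<subseteq> A \<and> (\<forall>x\<in>A'. \<forall>y\<in>A'. x \<noteq> y \<longrightarrow> f x \<inter> f y = {})}"
  have "\<forall>C\<in>chains ?F. \<Union>C \<in> ?F"
  proof
    fix C assume C: "C \<in> chains ?F"
    show "\<Union>C \<in> ?F"
    unfolding mem_Collect_eq
    proof (intro conjI)
      show "\<Union>C \<subseteq> A" using C by (auto simp: chains_def)
      show "\<forall>x\<in>\<Union>C. \<forall>y\<in>\<Union>C. x \<noteq> y \<longrightarrow> f x \<inter> f y = {}"
      proof (intro ballI impI)
        fix x y assume "x \<in> \<Union>C" "y \<in> \<Union>C" "x \<noteq> y"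
        then obtain X Y where "X \<in> C" "Y \<in> C" "x \<in> X" "y \<in> Y" by auto
        moreover have "X \<subseteq> Y \<or> Y \<subseteq> X" using C \<open>X \<in> C\<close> \<open>Y \<in> C\<close> by (auto simp: chains_def chain_subset_def)
        moreover have "X \<in> ?F" "Y \<in> ?F" using C \<open>X \<in> C\<close> \<open>Y \<in> C\<close> unfolding chains_def by blast+
        ultimately show "f x \<inter> f y = {}" using \<open>x \<noteq> y\<close>
        proof (elim disjE)
          assume "X \<subseteq> Y" thus ?thesis using \<open>Y \<in> ?F\<close> \<open>x \<in> X\<close> \<open>y \<in> Y\<close> \<open>x \<noteq> y\<close> by (simp, blast)
        next
          assume "Y \<subseteq> X" thus ?thesis using \<open>X \<in> ?F\<close> \<open>x \<in> X\<close> \<open>y \<in> Y\<close> \<open>x \<noteq> y\<close> by (simp, blast)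
        qed
      qed
    qed
  qed
  from Zorn_Lemma[OF this] obtain M where M: "M \<in> ?F" "\<forall>X\<in>?F. M \<subseteq> X \<longrightarrow> X = M" by (rule bexE)
  have "\<not> small M"
  proof (rule notI)
    assume sm: "small M"
    have MA: "M \<subseteq> A" using M(1) by simp
    obtain x where x: "x \<in> A - M" "\<forall>y\<in>M. f x \<inter> f y = {}" using assms[OF MA sm] by blast
    have x2: "\<forall>y\<in>M. f y \<inter> f x = {}" using x by blast
    have "insert x M \<in> ?F" unfolding mem_Collect_eq
    proof (intro conjI ballI impI)
      show "insert x M \<subseteq> A" using MA x by blast
      fix u v assume "u \<in> insert x M" "v \<in> insert x M" "u \<noteq> v"
      thus "f u \<inter> f v = {}" using M(1) x x2 by (simp, blast)
    qed
    hence "insert x M = M" using M(2) by (meson subset_insertI)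
    hence "x \<in> M" by (metis insertI1)
    thus False using x(1) by simp
  qed
  moreover have "M \<subseteq> A" "\<forall>x\<in>M. \<forall>y\<in>M. x \<noteq> y \<longrightarrow> f x \<inter> f y = {}" using M(1) by simp_all
  ultimately show ?thesis by (intro exI[of _ M]) simp
qed

lemma light_case:
  assumes fin: "\<forall>x\<in>A. finite (f x)" and li: "\<forall>b. small {x\<in>A. b \<in> f x}" and ns: "\<not> small A"
  shows "\<exists>A'\<subseteq>A. \<not> small A' \<and> (\<forall>x\<in>A'. \<forall>y\<in>A'. x \<noteq> y \<longrightarrow> f x \<inter> f y = {})"
proof (rule disjoint_sub)
  fix A'' assume A'': "A'' \<subseteq> A" "small A''"
  have fy: "\<And>y. y \<in> A'' \<Longrightarrow> small (f y)" using fin A''(1) small_finite by (meson subsetD)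
  have U: "small (\<Union>y\<in>A''. f y)" by (rule small_UN[OF A''(2) fy])
  have fb: "\<And>b. b \<in> (\<Union>y\<in>A''. f y) \<Longrightarrow> small {x\<in>A. b \<in> f x}" using li by blast
  have V: "small (\<Union>b\<in>(\<Union>y\<in>A''. f y). {x\<in>A. b \<in> f x})" by (rule small_UN[OF U fb])
  have Bad: "small (A'' \<union> (\<Union>b\<in>(\<Union>y\<in>A''. f y). {x\<in>A. b \<in> f x}))" by (rule small_Un[OF A''(2) V])
  have "\<not> A \<subseteq> A'' \<union> (\<Union>b\<in>(\<Union>y\<in>A''. f y). {x\<in>A. b \<in> f x})"
  proof
    assume "A \<subseteq> A'' \<union> (\<Union>b\<in>(\<Union>y\<in>A''. f y). {x\<in>A. b \<in> f x})"
    from small_subset[OF this Bad] ns show False by simp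
  qed
  then obtain x where x: "x \<in> A" "x \<notin> A''" "\<forall>b\<in>(\<Union>y\<in>A''. f y). b \<notin> f x" by blast
  show "\<exists>x\<in>A - A''. \<forall>y\<in>A''. f x \<inter> f y = {}"
  proof (intro bexI[of _ x] ballI)
    fix y assume "y \<in> A''" thus "f x \<inter> f y = {}" using x(3) by blast
  qed (use x in blast)
qed

lemma delta_n:
  "\<not> small A \<Longrightarrow> (\<forall>x\<in>A. finite (f x) \<and> card (f x) \<le> n) \<Longrightarrow> inj_on f A \<Longrightarrow>
    (\<exists>A'\<subseteq>A. \<not> small A' \<and> (\<exists>R. \<forall>x\<in>A'. \<forall>y\<in>A'. x \<noteq> y \<longrightarrow> f x \<inter> f y = R))"
proof (induction n arbitrary: A f)
  case 0
  have fin: "\<forall>x\<in>A. finite (f x)" using "0.prems"(2) by blast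
  have li: "\<forall>b. small {x\<in>A. b \<in> f x}"
  proof
    fix b have "{x\<in>A. b \<in> f x} = {}" using "0.prems"(2) by auto
    thus "small {x\<in>A. b \<in> f x}" using small_finite by (metis finite.emptyI)
  qed
  show ?case using light_case[OF fin li "0.prems"(1)] by blast
next
  case (Suc n)
  have fin: "\<forall>x\<in>A. finite (f x)" using Suc.prems(2) by blast
  show ?case
  proof (cases "\<forall>b. small {x\<in>A. b \<in> f x}")
    case True
    show ?thesis using light_case[OF fin True Suc.prems(1)] by blast
  next
    case False
    then obtain b where b: "\<not> small {x\<in>A. b \<in> f x}" by blast
    define Ab where "Ab = {x\<in>A. b \<in> f x}"
    define g where "g = (\<lambda>x. f x - {b})"
    have "\<forall>x\<in>Ab. finite (g x) \<and> card (g x) \<le> n"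
    proof
      fix x assume "x \<in> Ab"
      hence "x \<in> A" "b \<in> f x" by (auto simp: Ab_def)
      thus "finite (g x) \<and> card (g x) \<le> n" using Suc.prems(2) by (auto simp: g_def card_Diff_singleton)
    qed
    moreover have "inj_on g Ab"
    proof (rule inj_onI)
      fix x y assume "x \<in> Ab" "y \<in> Ab" "g x = g y"
      hence "f x = f y" by (auto simp: g_def Ab_def)
      thus "x = y" using Suc.prems(3) \<open>x \<in> Ab\<close> \<open>y \<in> Ab\<close> by (auto simp: Ab_def inj_on_def)
    qed
    moreover have "\<not> small Ab" using b by (simp add: Ab_def)
    ultimately obtain A' R where A': "A' \<subseteq> Ab" "\<not> small A'" "\<forall>x\<in>A'. \<forall>y\<in>A'. x \<noteq> y \<longrightarrow> g x \<inter> g y = R"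
      using Suc.IH by meson
    have "\<forall>x\<in>A'. \<forall>y\<in>A'. x \<noteq> y \<longrightarrow> f x \<inter> f y = insert b R"
    proof (intro ballI impI)
      fix x y assume xy: "x \<in> A'" "y \<in> A'" "x \<noteq> y"
      hence "b \<in> f x" "b \<in> f y" using A'(1) by (auto simp: Ab_def)
      moreover have "g x \<inter> g y = R" using A'(3) xy by blast
      ultimately show "f x \<inter> f y = insert b R" by (auto simp: g_def)
    qed
    moreover have "A' \<subseteq> A" using A'(1) by (auto simp: Ab_def)
    ultimately show ?thesis using A'(2) by blast
  qed
qed

lemma delta_system_lemma:
  assumes "\<not> small A" "\<forall>x\<in>A. finite (f x)" "inj_on f A"
  shows "\<exists>A'\<subseteq>A. \<not> small A' \<and> (\<exists>R. \<forall>x\<in>A'. \<forall>y\<in>A'. x \<noteq> y \<longrightarrow> f x \<inter> f y = R)"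
proof -
  obtain n where n: "\<not> small {x\<in>A. card (f x) = n}" using pigeon_nat[OF assms(1), of "\<lambda>x. card (f x)"] by blast
  have "\<forall>x\<in>{x\<in>A. card (f x) = n}. finite (f x) \<and> card (f x) \<le> n" using assms(2) by auto
  moreover have "inj_on f {x\<in>A. card (f x) = n}" using assms(3) by (auto simp: inj_on_def)
  ultimately obtain A' where "A' \<subseteq> {x\<in>A. card (f x) = n}" "\<not> small A'" "\<exists>R. \<forall>x\<in>A'. \<forall>y\<in>A'. x \<noteq> y \<longrightarrow> f x \<inter> f y = R"
    using delta_n[OF n, of f n] by blast
  thus ?thesis by blast
qed

end


locale fm =
  fixes E :: "'a set" and indep :: "'a set \<Rightarrow> bool"
  assumes M: "finitary_matroid E indep"
begin

lemma ax1: "\<forall>I. indep I \<longrightarrow> I \<subseteq> E" using M unfolding finitary_matroid_def by (elim conjE)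
lemma ax2: "indep {}" using M unfolding finitary_matroid_def by (elim conjE)
lemma ax3: "\<forall>I J. indep J \<and> I \<subseteq> J \<longrightarrow> indep I" using M unfolding finitary_matroid_def by (elim conjE)
lemma ax4: "\<forall>I J. finite I \<and> finite J \<and> indep I \<and> indep J \<and> card I < card J
        \<longrightarrow> (\<exists>x\<in>J - I. indep (insert x I))" using M unfolding finitary_matroid_def by (elim conjE)
lemma ax5: "\<forall>I. I \<subseteq> E \<and> (\<forall>F. F \<subseteq> I \<and> finite F \<longrightarrow> indep F) \<longrightarrow> indep I"
  using M unfolding finitary_matroid_def by (elim conjE)

lemma indep_E: "indep I \<Longrightarrow> I \<subseteq> E" using ax1 by simp
lemma indep_empty: "indep {}" by (rule ax2)
lemma indep_sub: "indep J \<Longrightarrow> I \<subseteq> J \<Longrightarrow> indep I" using ax3 by blast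
lemma augment: "finite I \<Longrightarrow> finite J \<Longrightarrow> indep I \<Longrightarrow> indep J \<Longrightarrow> card I < card J \<Longrightarrow> \<exists>x\<in>J - I. indep (insert x I)"
  using ax4 by blast
lemma finitary: assumes "I \<subseteq> E" "\<not> indep I" shows "\<exists>F\<subseteq>I. finite F \<and> \<not> indep F"
  using ax5 assms by blast

abbreviation circuit where "circuit C \<equiv> is_circuit E indep C"

definition rk :: "'a set \<Rightarrow> nat" where "rk X = Max (card ` {I. I \<subseteq> X \<and> indep I})"

lemma rk_fin: "finite X \<Longrightarrow> finite (card ` {I. I \<subseteq> X \<and> indep I})" by simp
lemma rk_ne: "card ` {I. I \<subseteq> X \<and> indep I} \<noteq> {}" using indep_empty by blast

lemma rk_ge: "finite X \<Longrightarrow> I \<subseteq> X \<Longrightarrow> indep I \<Longrightarrow> card I \<le> rk X"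
  unfolding rk_def by (rule Max_ge) auto

lemma rk_ex: assumes "finite X" shows "\<exists>I\<subseteq>X. indep I \<and> card I = rk X"
proof -
  have "rk X \<in> card ` {I. I \<subseteq> X \<and> indep I}" unfolding rk_def using rk_fin[OF assms] rk_ne by (rule Max_in)
  thus ?thesis by auto
qed

lemma rk_le_card: assumes "finite X" shows "rk X \<le> card X"
proof -
  obtain I where "I \<subseteq> X" "indep I" "card I = rk X" using rk_ex assms by blast
  thus ?thesis using card_mono assms by metis
qed

lemma rk_indep: assumes "finite X" "indep X" shows "rk X = card X"
proof -
  have "card X \<le> rk X" using rk_ge[OF assms(1) _ assms(2)] by simp
  thus ?thesis using rk_le_card[OF assms(1)] by linarith
qed

lemma rk_card_indep: assumes "finite X" "rk X = card X" shows "indep X"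
proof -
  obtain I where I: "I \<subseteq> X" "indep I" "card I = rk X" using rk_ex assms(1) by blast
  hence "I = X" using assms card_subset_eq by metis
  thus ?thesis using I(2) by simp
qed

lemma rk_mono: assumes "finite Y" "X \<subseteq> Y" shows "rk X \<le> rk Y"
proof -
  have fX: "finite X" using assms(1,2) by (rule finite_subset[rotated])
  obtain I where I: "I \<subseteq> X" "indep I" "card I = rk X" using rk_ex[OF fX] by blast
  have "card I \<le> rk Y" using rk_ge[OF assms(1) _ I(2)] I(1) assms(2) by blast
  thus ?thesis using I(3) by simp
qed

lemma extend: assumes "finite X" "J \<subseteq> X" "indep J"
  shows "\<exists>I. J \<subseteq> I \<and> I \<subseteq> X \<and> indep I \<and> card I = rk X"
proof -
  let ?S = "{I. J \<subseteq> I \<and> I \<subseteq> X \<and> indep I}"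
  have fS: "finite (card ` ?S)" using assms(1) by simp
  have nS: "card ` ?S \<noteq> {}" using assms by blast
  obtain I where I: "I \<in> ?S" "card I = Max (card ` ?S)" using Max_in[OF fS nS] by auto
  have mx: "\<And>I'. I' \<in> ?S \<Longrightarrow> card I' \<le> card I" using I(2) fS by simp
  obtain K where K: "K \<subseteq> X" "indep K" "card K = rk X" using rk_ex assms(1) by blast
  have "\<not> card I < card K"
  proof
    assume "card I < card K"
    moreover have "finite I" "finite K" using I(1) K(1) assms(1) finite_subset by auto
    ultimately obtain x where x: "x \<in> K - I" "indep (insert x I)" using augment I(1) K(2) by blast
    hence "insert x I \<in> ?S" using I(1) K(1) by auto
    hence "card (insert x I) \<le> card I" by (rule mx)
    thus False using x \<open>finite I\<close> by simp
  qed
  moreover have "card I \<le> rk X" using I(1) rk_ge assms(1) by blast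
  ultimately show ?thesis using I(1) K(3) by auto
qed

lemma submod: assumes "finite A" "finite B"
  shows "rk (A \<union> B) + rk (A \<inter> B) \<le> rk A + rk B"
proof -
  obtain I where I: "I \<subseteq> A \<inter> B" "indep I" "card I = rk (A \<inter> B)" using rk_ex assms by (meson finite_Int)
  obtain J where J: "I \<subseteq> J" "J \<subseteq> A \<union> B" "indep J" "card J = rk (A \<union> B)"
    using extend[of "A \<union> B" I] I assms by blast
  have fJ: "finite J" using J(2) assms finite_subset by blast
  have a: "card (J \<inter> A) \<le> rk A" using rk_ge assms(1) indep_sub J(3) by (meson inf_le1 inf_le2)
  have b: "card (J \<inter> B) \<le> rk B" using rk_ge assms(2) indep_sub J(3) by (meson inf_le1 inf_le2)
  have c: "card (J \<inter> (A \<inter> B)) \<le> card I"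
    using rk_ge[of "A \<inter> B" "J \<inter> (A \<inter> B)"] assms indep_sub J(3) I(3) by (metis finite_Int inf_le1 inf_le2)
  have d: "card (J \<inter> A) + card (J \<inter> B) = card J + card (J \<inter> (A \<inter> B))"
  proof -
    have "card ((J \<inter> A) \<union> (J \<inter> B)) + card ((J \<inter> A) \<inter> (J \<inter> B)) = card (J \<inter> A) + card (J \<inter> B)"
      using fJ by (intro card_Un_Int[symmetric]) auto
    moreover have "(J \<inter> A) \<union> (J \<inter> B) = J" using J(2) by blast
    moreover have "(J \<inter> A) \<inter> (J \<inter> B) = J \<inter> (A \<inter> B)" by blast
    ultimately show ?thesis by simp
  qed
  have "card I \<le> card (J \<inter> (A \<inter> B))" using I(1) J(1) fJ by (intro card_mono) auto
  thus ?thesis using a b c d I(3) J(4) by linarith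
qed

lemma circuit_dep: "circuit C \<Longrightarrow> \<not> indep C" unfolding is_circuit_def by blast
lemma circuit_E: "circuit C \<Longrightarrow> C \<subseteq> E" unfolding is_circuit_def by blast
lemma circuit_proper: "circuit C \<Longrightarrow> D \<subset> C \<Longrightarrow> indep D" unfolding is_circuit_def by blast

lemma circuit_finite: assumes "circuit C" shows "finite C"
proof -
  obtain F where F: "F \<subseteq> C" "finite F" "\<not> indep F" using finitary[OF circuit_E[OF assms] circuit_dep[OF assms]] by blast
  have "F = C" using F circuit_proper[OF assms] by blast
  thus ?thesis using F by simp
qed

lemma circuit_rk: assumes "circuit C" shows "rk C + 1 = card C"
proof -
  have f: "finite C" using circuit_finite[OF assms] .
  have "C \<noteq> {}" using indep_empty circuit_dep[OF assms] by blast
  then obtain x where x: "x \<in> C" by blast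
  have "indep (C - {x})" using circuit_proper[OF assms] x by blast
  hence "card (C - {x}) \<le> rk C" using rk_ge[OF f, of "C - {x}"] by blast
  hence "card C \<le> rk C + 1" using x f by (simp add: card_Diff_singleton)
  moreover have "rk C \<noteq> card C" using rk_card_indep[OF f] circuit_dep[OF assms] by blast
  moreover have "rk C \<le> card C" using rk_le_card[OF f] .
  ultimately show ?thesis by linarith
qed

lemma min_dep: assumes "finite X" "X \<subseteq> E" "\<not> indep X" shows "\<exists>C\<subseteq>X. circuit C"
proof -
  let ?S = "{Y. Y \<subseteq> X \<and> \<not> indep Y}"
  have fS: "finite (card ` ?S)" using assms(1) by simp
  have nS: "card ` ?S \<noteq> {}" using assms by blast
  obtain Y where Y: "Y \<in> ?S" "card Y = Min (card ` ?S)" using Min_in[OF fS nS] by auto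
  have mn: "\<And>Y'. Y' \<in> ?S \<Longrightarrow> card Y \<le> card Y'" using Y(2) fS by simp
  have "circuit Y" unfolding is_circuit_def
  proof (intro conjI allI impI)
    show "Y \<subseteq> E" using Y(1) assms(2) by blast
    show "\<not> indep Y" using Y(1) by blast
    fix D assume D: "D \<subset> Y"
    have "Y \<subseteq> X" using Y(1) by simp
    hence "finite Y" using assms(1) by (rule finite_subset)
    hence "card D < card Y" using D psubset_card_mono by blast
    thus "indep D" using mn[of D] D Y(1) by fastforce
  qed
  thus ?thesis using Y(1) by blast
qed

lemma dep_circuit_elem: assumes "finite X" "X \<subseteq> E" "indep (X - {e})" "\<not> indep X"
  shows "\<exists>C\<subseteq>X. circuit C \<and> e \<in> C"
proof -
  obtain C where C: "C \<subseteq> X" "circuit C" using min_dep[OF assms(1,2,4)] by blast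
  have "e \<in> C"
  proof (rule ccontr)
    assume "e \<notin> C"
    hence "C \<subseteq> X - {e}" using C by blast
    thus False using indep_sub[OF assms(3)] circuit_dep[OF C(2)] by blast
  qed
  thus ?thesis using C by blast
qed

lemma cl_circuit: assumes "finite X" "insert e X \<subseteq> E" "e \<notin> X" "rk (insert e X) = rk X"
  shows "\<exists>C\<subseteq>insert e X. circuit C \<and> e \<in> C"
proof -
  obtain I where I: "I \<subseteq> X" "indep I" "card I = rk X" using rk_ex assms(1) by blast
  have fI: "finite I" using I(1) assms(1) by (rule finite_subset)
  have "\<not> indep (insert e I)"
  proof
    assume "indep (insert e I)"
    hence "card (insert e I) \<le> rk (insert e X)" using rk_ge[of "insert e X" "insert e I"] assms(1) I(1) by blast
    moreover have "e \<notin> I" using I(1) assms(3) by blast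
    hence "card (insert e I) = card I + 1" using fI by simp
    ultimately show False using I(3) assms(4) by linarith
  qed
  moreover have "insert e I - {e} = I" using I(1) assms(3) by blast
  ultimately obtain C where "C \<subseteq> insert e I" "circuit C" "e \<in> C"
    using dep_circuit_elem[of "insert e I" e] fI I(1,2) assms(2) by auto
  thus ?thesis using I(1) by blast
qed

lemma circuit_span: assumes "circuit C" "x \<in> C" "finite W" "C \<subseteq> insert x W"
  shows "rk (insert x W) = rk W"
proof (cases "x \<in> W")
  case True thus ?thesis by (simp add: insert_absorb)
next
  case False
  have fC: "finite C" using circuit_finite[OF assms(1)] .
  have s0: "rk (W \<union> C) + rk (W \<inter> C) \<le> rk W + rk C" using submod[OF assms(3) fC] .
  have eq1: "W \<union> C = insert x W" using assms by blast
  have eq2: "W \<inter> C = C - {x}" using assms False by blast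
  have "rk (insert x W) + rk (C - {x}) \<le> rk W + rk C" using s0 unfolding eq1 eq2 .
  moreover have "rk (C - {x}) + 1 = card C"
  proof -
    have "indep (C - {x})" using circuit_proper[OF assms(1)] assms(2) by blast
    hence "rk (C - {x}) = card (C - {x})" using rk_indep[of "C - {x}"] fC by blast
    moreover have "Suc (card (C - {x})) = card C" using card_Suc_Diff1[OF fC assms(2)] .
    ultimately show ?thesis by simp
  qed
  moreover have "rk C + 1 = card C" using circuit_rk[OF assms(1)] .
  moreover have "rk W \<le> rk (insert x W)" using rk_mono[of "insert x W" W] assms(3) by auto
  ultimately show ?thesis by linarith
qed

lemma span_set: assumes "finite G" "finite Z" "\<forall>x\<in>G. \<exists>C. circuit C \<and> x \<in> C \<and> C \<subseteq> insert x Z"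
  shows "rk (G \<union> Z) = rk Z"
  using assms
proof (induction G rule: finite_induct)
  case empty thus ?case by simp
next
  case (insert x F)
  obtain C where C: "circuit C" "x \<in> C" "C \<subseteq> insert x Z" using insert.prems by blast
  have "rk (insert x (F \<union> Z)) = rk (F \<union> Z)"
    by (rule circuit_span[OF C(1,2)]) (use insert.hyps(1) insert.prems(1) C(3) in auto)
  thus ?case using insert by simp
qed

lemma base_E: "is_base indep B \<Longrightarrow> B \<subseteq> E" unfolding is_base_def using indep_E by simp

lemma fc_exists: assumes "is_base indep B" "e \<in> E" "e \<notin> B"
  shows "\<exists>C. circuit C \<and> C \<subseteq> insert e B"
proof -
  have "\<not> indep (insert e B)"
  proof
    assume "indep (insert e B)"
    hence "insert e B = B" using assms(1) unfolding is_base_def by blast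
    thus False using assms(3) by blast
  qed
  moreover have iE: "insert e B \<subseteq> E" using base_E[OF assms(1)] assms(2) by simp
  ultimately obtain F where F: "F \<subseteq> insert e B" "finite F" "\<not> indep F" using finitary[OF iE] by blast
  have "F \<subseteq> E" using F(1) iE by (rule order_trans)
  then obtain C where "C \<subseteq> F" "circuit C" using min_dep[OF F(2) _ F(3)] by blast
  thus ?thesis using F by blast
qed

lemma circuit_in_base_elem: assumes "is_base indep B" "circuit C" "C \<subseteq> insert e B" shows "e \<in> C"
proof (rule ccontr)
  assume "e \<notin> C"
  hence "C \<subseteq> B" using assms(3) by blast
  moreover have "indep B" using assms(1) unfolding is_base_def by simp
  ultimately show False using indep_sub circuit_dep[OF assms(2)] by blast
qed

lemma fc_unique: assumes "is_base indep B" "e \<notin> B" "circuit C1" "C1 \<subseteq> insert e B" "circuit C2" "C2 \<subseteq> insert e B"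
  shows "C1 = C2"
proof (rule ccontr)
  assume ne: "C1 \<noteq> C2"
  have e1: "e \<in> C1" using circuit_in_base_elem[OF assms(1,3,4)] .
  have e2: "e \<in> C2" using circuit_in_base_elem[OF assms(1,5,6)] .
  have f1: "finite C1" using circuit_finite[OF assms(3)] .
  have f2: "finite C2" using circuit_finite[OF assms(5)] .
  have "\<not> C1 \<subseteq> C2"
  proof
    assume "C1 \<subseteq> C2"
    hence "C1 \<subset> C2" using ne by blast
    thus False using circuit_proper[OF assms(5)] circuit_dep[OF assms(3)] by blast
  qed
  hence "C1 \<inter> C2 \<subset> C1" by blast
  hence "indep (C1 \<inter> C2)" using circuit_proper[OF assms(3)] by blast
  hence r12: "rk (C1 \<inter> C2) = card (C1 \<inter> C2)" using rk_indep[of "C1 \<inter> C2"] f1 by simp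
  have iB: "indep B" using assms(1) unfolding is_base_def by simp
  have "(C1 \<union> C2) - {e} \<subseteq> B" using assms(4,6) by blast
  hence "indep ((C1 \<union> C2) - {e})" using indep_sub[OF iB] by simp
  hence "card ((C1 \<union> C2) - {e}) \<le> rk (C1 \<union> C2)" using rk_ge[of "C1 \<union> C2" "(C1 \<union> C2) - {e}"] f1 f2 by blast
  hence ru: "card (C1 \<union> C2) \<le> rk (C1 \<union> C2) + 1" using e1 f1 f2 by (simp add: card_Diff_singleton)
  have cu: "card (C1 \<union> C2) + card (C1 \<inter> C2) = card C1 + card C2" using card_Un_Int[OF f1 f2] by simp
  have "rk (C1 \<union> C2) + rk (C1 \<inter> C2) \<le> rk C1 + rk C2" using submod[OF f1 f2] .
  moreover have "rk C1 + 1 = card C1" "rk C2 + 1 = card C2" using circuit_rk[OF assms(3)] circuit_rk[OF assms(5)] by simp_all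
  ultimately show False using r12 ru cu by linarith
qed

lemma fc: assumes "is_base indep B" "e \<in> E" "e \<notin> B"
  shows "circuit (fund_circuit E indep e B)" "fund_circuit E indep e B \<subseteq> insert e B" "e \<in> fund_circuit E indep e B"
    "finite (fund_circuit E indep e B)"
proof -
  obtain C where C: "circuit C" "C \<subseteq> insert e B" using fc_exists[OF assms] by blast
  have "fund_circuit E indep e B = C" unfolding fund_circuit_def
    by (rule the_equality) (use C fc_unique[OF assms(1,3) C] in blast)+
  thus "circuit (fund_circuit E indep e B)" "fund_circuit E indep e B \<subseteq> insert e B" using C by auto
  thus "e \<in> fund_circuit E indep e B" using circuit_in_base_elem[OF assms(1)] by blast
  show "finite (fund_circuit E indep e B)" using circuit_finite[OF \<open>circuit (fund_circuit E indep e B)\<close>] .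
qed

lemma fc_eq: assumes "is_base indep B" "e \<notin> B" "circuit C" "C \<subseteq> insert e B"
  shows "fund_circuit E indep e B = C"
  unfolding fund_circuit_def by (rule the_equality) (use assms fc_unique[OF assms] in blast)+

end


locale ctx = fm E indep + kap H for E :: "'a set" and indep and H :: "'a set" +
  fixes B B' :: "'a set"
  assumes base: "is_base indep B" and HEB: "H \<subseteq> E - B" and B'sub: "B' \<subseteq> B"
    and B'card: "|B'| <o |H|" and meet: "\<forall>e\<in>H. fund_circuit E indep e B \<inter> B' \<noteq> {}"
begin

abbreviation C where "C e \<equiv> fund_circuit E indep e B"

lemma CH: assumes "e \<in> H"
  shows "circuit (C e)" "C e \<subseteq> insert e B" "e \<in> C e" "finite (C e)"
proof -
  have "e \<in> E" "e \<notin> B" using assms HEB by auto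
  thus "circuit (C e)" "C e \<subseteq> insert e B" "e \<in> C e" "finite (C e)" using fc[OF base] by blast+
qed

lemma H_notB: "e \<in> H \<Longrightarrow> e \<notin> B" using HEB by blast

lemma C_inj: "inj_on C H"
proof (rule inj_onI)
  fix x y assume xy: "x \<in> H" "y \<in> H" "C x = C y"
  hence "x \<in> insert y B" using CH[OF xy(1)] CH[OF xy(2)] by auto
  thus "x = y" using H_notB[OF xy(1)] by blast
qed

lemma notsmallH: "\<not> small H" using ordLess_irreflexive by blast

lemma stepA: "\<exists>H1\<subseteq>H. \<not> small H1 \<and> (\<exists>R. \<forall>x\<in>H1. \<forall>y\<in>H1. x \<noteq> y \<longrightarrow> C x \<inter> C y = R)"
  using delta_system_lemma[OF notsmallH _ C_inj] CH(4) by blast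

lemma stepB: "\<exists>H2 R. H2 \<subseteq> H \<and> \<not> small H2 \<and> (\<forall>x\<in>H2. \<forall>y\<in>H2. x \<noteq> y \<longrightarrow> C x \<inter> C y = R) \<and>
   (\<forall>x\<in>H2. R \<subseteq> C x) \<and> (\<forall>x\<in>H2. C x \<inter> B' = R \<inter> B') \<and> R \<inter> B' \<noteq> {}"
proof -
  obtain H1 R where H1: "H1 \<subseteq> H" "\<not> small H1" "\<forall>x\<in>H1. \<forall>y\<in>H1. x \<noteq> y \<longrightarrow> C x \<inter> C y = R"
    using stepA by blast
  define Bad where "Bad = {x\<in>H1. (C x - R) \<inter> B' \<noteq> {}}"
  define g where "g = (\<lambda>x. SOME b. b \<in> (C x - R) \<inter> B')"
  have g: "\<And>x. x \<in> Bad \<Longrightarrow> g x \<in> (C x - R) \<inter> B'"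
    unfolding g_def Bad_def by (rule someI_ex) blast
  have "inj_on g Bad"
  proof (rule inj_onI)
    fix x y assume xy: "x \<in> Bad" "y \<in> Bad" "g x = g y"
    show "x = y"
    proof (rule ccontr)
      assume "x \<noteq> y"
      hence "C x \<inter> C y = R" using H1(3) xy(1,2) by (auto simp: Bad_def)
      moreover have "g x \<in> C x - R" "g x \<in> C y" using g[OF xy(1)] g[OF xy(2)] xy(3) by auto
      ultimately show False by blast
    qed
  qed
  hence "|Bad| \<le>o |B'|" using g by (intro card_of_ordLeqI[of g]) auto
  hence smB: "small Bad" using B'card by (rule ordLeq_ordLess_trans)
  define H2 where "H2 = H1 - Bad"
  have nsH2: "\<not> small H2"
  proof
    assume "small H2"
    hence "small (H2 \<union> Bad)" using smB by (rule small_Un)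
    moreover have "H1 \<subseteq> H2 \<union> Bad" unfolding H2_def by blast
    ultimately have "small H1" by (rule small_subset[rotated])
    thus False using H1(2) by simp
  qed
  have infH1: "infinite H1" using notsmall_infinite[OF H1(2)] .
  have RC: "\<forall>x\<in>H1. R \<subseteq> C x"
  proof
    fix x assume x: "x \<in> H1"
    have "infinite (H1 - {x})" using infH1 by simp
    then obtain y where "y \<in> H1 - {x}" using infinite_imp_nonempty by blast
    hence "C x \<inter> C y = R" using H1(3) x by blast
    thus "R \<subseteq> C x" by blast
  qed
  have eqS: "\<forall>x\<in>H2. C x \<inter> B' = R \<inter> B'"
  proof
    fix x assume "x \<in> H2"
    hence "x \<in> H1" "(C x - R) \<inter> B' = {}" by (auto simp: H2_def Bad_def)
    thus "C x \<inter> B' = R \<inter> B'" using RC by blast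
  qed
  have "H2 \<noteq> {}" using notsmall_infinite[OF nsH2] by auto
  then obtain x where x: "x \<in> H2" by blast
  have "x \<in> H" using x H1(1) by (auto simp: H2_def)
  hence "C x \<inter> B' \<noteq> {}" using meet by blast
  hence "R \<inter> B' \<noteq> {}" using eqS x by simp
  moreover have "H2 \<subseteq> H" using H1(1) by (auto simp: H2_def)
  moreover have "\<forall>x\<in>H2. \<forall>y\<in>H2. x \<noteq> y \<longrightarrow> C x \<inter> C y = R" using H1(3) by (auto simp: H2_def)
  moreover have "\<forall>x\<in>H2. R \<subseteq> C x" using RC by (auto simp: H2_def)
  ultimately show ?thesis using nsH2 eqS by blast
qed

end

locale ctx2 = ctx +
  fixes H2 R :: "'a set"
  assumes H2H: "H2 \<subseteq> H" and nsH2: "\<not> small H2"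
    and disj: "\<forall>x\<in>H2. \<forall>y\<in>H2. x \<noteq> y \<longrightarrow> C x \<inter> C y = R"
    and RC: "\<forall>x\<in>H2. R \<subseteq> C x" and CB': "\<forall>x\<in>H2. C x \<inter> B' = R \<inter> B'"
    and Sne: "R \<inter> B' \<noteq> {}"
begin

abbreviation S where "S \<equiv> R \<inter> B'"
definition NN :: "'a set \<Rightarrow> 'a set" where "NN G = (\<Union>x\<in>G. C x - {x}) - S"
definition rho :: "'a set \<Rightarrow> nat" where "rho G = rk (G \<union> NN G) - card (NN G)"

lemma SB: "S \<subseteq> B" using B'sub by blast

lemma H2ne: "H2 \<noteq> {}" using notsmall_infinite[OF nsH2] by auto

lemma finS: "finite S"
proof -
  obtain x where x: "x \<in> H2" using H2ne by blast
  have "S \<subseteq> C x" using RC x by blast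
  moreover have "finite (C x)" using CH(4) x H2H by blast
  ultimately show ?thesis by (rule finite_subset)
qed

lemma CH2: assumes "x \<in> H2" shows "circuit (C x)" "C x \<subseteq> insert x B" "x \<in> C x" "finite (C x)"
  using CH[of x] assms H2H by blast+

lemma indepB: "X \<subseteq> B \<Longrightarrow> indep X"
  using base indep_sub unfolding is_base_def by blast

lemma BE: "B \<subseteq> E" using base_E[OF base] .

lemma NN_B: "G \<subseteq> H2 \<Longrightarrow> NN G \<subseteq> B - S"
  unfolding NN_def using CH2(2) by blast

lemma NN_fin: assumes "finite G" "G \<subseteq> H2" shows "finite (NN G)"
proof -
  have "finite (\<Union>x\<in>G. C x - {x})" using assms CH2(4) by blast
  thus ?thesis unfolding NN_def by simp
qed

lemma NN_mono: "G \<subseteq> G' \<Longrightarrow> NN G \<subseteq> NN G'" unfolding NN_def by blast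

lemma G_B: "G \<subseteq> H2 \<Longrightarrow> G \<inter> B = {}" using H2H H_notB by blast

lemma span_G: assumes "finite G" "G \<subseteq> H2" "finite Z" "NN G \<union> S \<subseteq> Z"
  shows "rk (G \<union> Z) = rk Z"
proof (rule span_set[OF assms(1,3)])
  show "\<forall>x\<in>G. \<exists>C. circuit C \<and> x \<in> C \<and> C \<subseteq> insert x Z"
  proof
    fix x assume x: "x \<in> G"
    have xH: "x \<in> H2" using x assms(2) by blast
    have "C x \<subseteq> insert x Z"
    proof
      fix z assume z: "z \<in> C x"
      show "z \<in> insert x Z"
      proof (cases "z = x")
        case False
        hence "z \<in> C x - {x}" using z by blast
        hence "z \<in> NN G \<or> z \<in> S" unfolding NN_def using x by blast
        thus ?thesis using assms(4) by blast
      qed simp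
    qed
    thus "\<exists>C. circuit C \<and> x \<in> C \<and> C \<subseteq> insert x Z" using CH2[OF xH] by blast
  qed
qed

lemma rk_BS: assumes "X \<subseteq> B" "finite X" shows "rk X = card X"
  using rk_indep[OF assms(2) indepB[OF assms(1)]] .

lemma pad: assumes "finite G" "G \<subseteq> H2" "finite N'" "NN G \<subseteq> N'" "N' \<subseteq> B - S"
  shows "rho G + card N' = rk (G \<union> N')"
proof -
  define N where "N = NN G"
  define Q where "Q = N' - N"
  have fN: "finite N" unfolding N_def using NN_fin assms(1,2) .
  have fQ: "finite Q" unfolding Q_def using assms(3) by simp
  have NB: "N \<subseteq> B - S" unfolding N_def using NN_B[OF assms(2)] .
  have fG: "finite (G \<union> N)" using assms(1) fN by simp
  have cN': "card N' = card N + card Q"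
  proof -
    have "N' = N \<union> Q" "N \<inter> Q = {}" using assms(4) unfolding Q_def N_def by blast+
    thus ?thesis using fN fQ card_Un_disjoint by metis
  qed
  have rN: "card N \<le> rk (G \<union> N)" using rk_ge[OF fG _ indepB] NB by blast
  hence rho: "rho G + card N = rk (G \<union> N)" unfolding rho_def N_def by simp
  have up: "rk (G \<union> N') \<le> rk (G \<union> N) + card Q"
  proof -
    have eq: "(G \<union> N) \<union> Q = G \<union> N'" using assms(4) unfolding Q_def N_def by blast
    have "rk ((G \<union> N) \<union> Q) + rk ((G \<union> N) \<inter> Q) \<le> rk (G \<union> N) + rk Q" by (rule submod[OF fG fQ])
    hence "rk (G \<union> N') + rk ((G \<union> N) \<inter> Q) \<le> rk (G \<union> N) + rk Q" unfolding eq .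
    moreover have "rk Q \<le> card Q" by (rule rk_le_card[OF fQ])
    ultimately show ?thesis by linarith
  qed
  have lo: "rk (G \<union> N) + card Q \<le> rk (G \<union> N')"
  proof -
    have fA: "finite (G \<union> N')" using assms(1,3) by simp
    have fA2: "finite (G \<union> (N \<union> S))" using assms(1) fN finS by simp
    have s: "rk ((G \<union> N') \<union> (G \<union> (N \<union> S))) + rk ((G \<union> N') \<inter> (G \<union> (N \<union> S)))
       \<le> rk (G \<union> N') + rk (G \<union> (N \<union> S))" by (rule submod[OF fA fA2])
    have GB: "G \<inter> B = {}" using G_B[OF assms(2)] .
    have e1: "(G \<union> N') \<union> (G \<union> (N \<union> S)) = G \<union> (N' \<union> S)" using assms(4) unfolding N_def by blast
    have e2: "(G \<union> N') \<inter> (G \<union> (N \<union> S)) = G \<union> N" using assms(4,5) GB SB unfolding N_def by blast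
    have r1: "rk (G \<union> (N' \<union> S)) = card N' + card S"
    proof -
      have "rk (G \<union> (N' \<union> S)) = rk (N' \<union> S)"
        by (rule span_G[OF assms(1,2)]) (use assms(3,4) finS in \<open>auto simp: N_def\<close>)
      also have "\<dots> = card (N' \<union> S)" by (rule rk_BS) (use assms(3,5) SB finS in auto)
      also have "\<dots> = card N' + card S" by (rule card_Un_disjoint) (use assms(3,5) finS in auto)
      finally show ?thesis .
    qed
    have r2: "rk (G \<union> (N \<union> S)) = card N + card S"
    proof -
      have "rk (G \<union> (N \<union> S)) = rk (N \<union> S)"
        by (rule span_G[OF assms(1,2)]) (use fN finS in \<open>auto simp: N_def\<close>)
      also have "\<dots> = card (N \<union> S)" by (rule rk_BS) (use NB fN SB finS in auto)
      also have "\<dots> = card N + card S" by (rule card_Un_disjoint) (use fN NB finS in auto)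
      finally show ?thesis .
    qed
    show ?thesis using s unfolding e1 e2 r1 r2 using cN' by linarith
  qed
  show ?thesis using up lo rho cN' by linarith
qed

lemma rho_mono: assumes "finite G'" "G \<subseteq> G'" "G' \<subseteq> H2" shows "rho G \<le> rho G'"
proof -
  have fG: "finite G" using assms(1,2) by (rule finite_subset[rotated])
  have fN: "finite (NN G')" using NN_fin assms(1,3) .
  have "rho G + card (NN G') = rk (G \<union> NN G')"
    by (rule pad[OF fG _ fN]) (use assms NN_mono NN_B in auto)
  moreover have "rho G' + card (NN G') = rk (G' \<union> NN G')"
    by (rule pad[OF assms(1,3) fN]) (use assms NN_B in auto)
  moreover have "rk (G \<union> NN G') \<le> rk (G' \<union> NN G')" by (rule rk_mono) (use assms(1,2) fN in auto)
  ultimately show ?thesis by linarith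
qed

lemma rho_le: assumes "finite G" "G \<subseteq> H2" shows "rho G \<le> card S"
proof -
  have fN: "finite (NN G)" using NN_fin assms .
  have NB: "NN G \<subseteq> B - S" using NN_B assms(2) .
  have "rho G + card (NN G) = rk (G \<union> NN G)" by (rule pad[OF assms fN order_refl NB])
  moreover have "rk (G \<union> NN G) \<le> rk (G \<union> (NN G \<union> S))" by (rule rk_mono) (use assms fN finS in auto)
  moreover have "rk (G \<union> (NN G \<union> S)) = rk (NN G \<union> S)" by (rule span_G[OF assms]) (use fN finS in auto)
  moreover have "rk (NN G \<union> S) = card (NN G \<union> S)" by (rule rk_BS) (use NB fN SB finS in auto)
  moreover have "card (NN G \<union> S) = card (NN G) + card S" by (rule card_Un_disjoint) (use fN NB finS in auto)
  ultimately show ?thesis by linarith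
qed

lemma rho_circ: assumes "finite G" "G \<subseteq> H2" "e \<in> H2" "e \<notin> G" "rho (insert e G) = rho G"
  shows "\<exists>D. circuit D \<and> e \<in> D \<and> D \<subseteq> insert e (G \<union> NN (insert e G))"
proof -
  define N' where "N' = NN (insert e G)"
  have iG: "finite (insert e G)" "insert e G \<subseteq> H2" using assms by auto
  have fN: "finite N'" unfolding N'_def using NN_fin[OF iG] .
  have NB: "N' \<subseteq> B - S" unfolding N'_def using NN_B[OF iG(2)] .
  have "rho G + card N' = rk (G \<union> N')"
    by (rule pad[OF assms(1,2) fN _ NB]) (unfold N'_def, rule NN_mono, blast)
  moreover have "rho (insert e G) + card N' = rk (insert e G \<union> N')"
    by (rule pad[OF iG fN _ NB]) (simp add: N'_def)
  ultimately have eq: "rk (insert e (G \<union> N')) = rk (G \<union> N')" using assms(5) by simp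
  have "insert e (G \<union> N') \<subseteq> E" using iG(2) H2H HEB NB BE by blast
  moreover have "e \<notin> G \<union> N'" using assms(4) NB H_notB assms(3) H2H by blast
  ultimately obtain D where "D \<subseteq> insert e (G \<union> N')" "circuit D" "e \<in> D"
    using cl_circuit[of "G \<union> N'" e] assms(1) fN eq by auto
  thus ?thesis unfolding N'_def by blast
qed

lemma final:
  "\<exists>e\<in>H. \<exists>D K. delta_system D K \<and> |D| =o |H| \<and> (\<forall>C\<in>D. circuit C) \<and>
     \<Union>D \<subseteq> (\<Union>e'\<in>H. C e') \<and> e \<in> K \<and> K \<subseteq> C e - B'"
proof -
  define P where "P k \<longleftrightarrow> (\<exists>Y0\<subseteq>H2. small (H2 - Y0) \<and> (\<forall>G. G \<subseteq> Y0 \<and> finite G \<longrightarrow> rho G \<le> k))" for k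
  have "P (card S)" unfolding P_def
  proof (intro exI[of _ H2] conjI)
    show "small (H2 - H2)" using small_finite[of "{}::'a set"] by simp
    show "\<forall>G. G \<subseteq> H2 \<and> finite G \<longrightarrow> rho G \<le> card S" using rho_le by blast
  qed simp
  define m where "m = (LEAST k. P k)"
  have "P m" unfolding m_def by (rule LeastI) (rule \<open>P (card S)\<close>)
  then obtain Y0 where Y0: "Y0 \<subseteq> H2" "small (H2 - Y0)" "\<And>G. G \<subseteq> Y0 \<Longrightarrow> finite G \<Longrightarrow> rho G \<le> m"
    unfolding P_def by blast
  have least: "\<And>k. P k \<Longrightarrow> m \<le> k" unfolding m_def by (rule Least_le)
  have key: "\<exists>G\<subseteq>Y. finite G \<and> rho G = m" if Y: "Y \<subseteq> Y0" "small (H2 - Y)" for Y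
  proof (rule ccontr)
    assume a: "\<not> ?thesis"
    have lt: "\<forall>G. G \<subseteq> Y \<and> finite G \<longrightarrow> rho G < m"
    proof (intro allI impI)
      fix G assume "G \<subseteq> Y \<and> finite G"
      hence "rho G \<le> m" "rho G \<noteq> m" using Y0(3) Y(1) a by blast+
      thus "rho G < m" by simp
    qed
    hence "rho {} < m" by blast
    hence "P (m - 1)" unfolding P_def using lt Y Y0(1) by (intro exI[of _ Y]) auto
    hence "m \<le> m - 1" by (rule least)
    thus False using \<open>rho {} < m\<close> by simp
  qed
  have nsY0: "\<not> small Y0"
  proof
    assume "small Y0"
    hence "small (Y0 \<union> (H2 - Y0))" using Y0(2) by (rule small_Un)
    hence "small H2" by (rule small_subset[rotated]) blast
    thus False using nsH2 by simp
  qed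
  obtain es where es: "es \<in> Y0" using infinite_imp_nonempty[OF notsmall_infinite[OF nsY0]] by blast
  have esH2: "es \<in> H2" using es Y0(1) by blast
  have esH: "es \<in> H" using esH2 H2H by blast
  define sp where "sp G \<longleftrightarrow> finite G \<and> G \<noteq> {} \<and> G \<subseteq> Y0 - {es} \<and> rho (insert es G) = rho G" for G
  have ex: "\<exists>G. sp G \<and> G \<inter> U = {}" if U: "small U" for U :: "'a set"
  proof -
    define Y where "Y = Y0 - {es} - U"
    have "small ((H2 - Y0) \<union> ({es} \<union> U))" using Y0(2) small_Un small_finite U by (metis finite.emptyI finite.insertI)
    hence smY: "small (H2 - Y)" by (rule small_subset[rotated]) (auto simp: Y_def)
    have "Y \<subseteq> Y0" unfolding Y_def by blast
    then obtain G0 where G0: "G0 \<subseteq> Y" "finite G0" "rho G0 = m" using key smY by blast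
    have nsY: "\<not> small Y"
    proof
      assume "small Y"
      hence "small (Y \<union> (H2 - Y))" using smY by (rule small_Un)
      hence "small H2" by (rule small_subset[rotated]) blast
      thus False using nsH2 by simp
    qed
    have "infinite (Y - G0)" using notsmall_infinite[OF nsY] G0(2) by simp
    then obtain x where x: "x \<in> Y - G0" using infinite_imp_nonempty by blast
    define G where "G = insert x G0"
    have GY: "G \<subseteq> Y" using G0(1) x unfolding G_def by blast
    have fG: "finite G" using G0(2) unfolding G_def by simp
    have GH2: "G \<subseteq> H2" using GY Y0(1) unfolding Y_def by blast
    have r1: "rho G \<le> m" using Y0(3) GY fG unfolding Y_def by blast
    have r2: "m \<le> rho G" using rho_mono[OF fG _ GH2, of G0] G0(3) unfolding G_def by blast
    have r3: "rho (insert es G) \<le> m" using Y0(3)[of "insert es G"] GY fG es unfolding Y_def by blast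
    have r4: "rho G \<le> rho (insert es G)" using rho_mono[of "insert es G" G] fG GH2 esH2 by blast
    have "sp G" unfolding sp_def using fG GY r1 r2 r3 r4 unfolding G_def Y_def by auto
    moreover have "G \<inter> U = {}" using GY unfolding Y_def by blast
    ultimately show ?thesis by blast
  qed
  have "\<exists>A'\<subseteq>Collect sp. \<not> small A' \<and> (\<forall>x\<in>A'. \<forall>y\<in>A'. x \<noteq> y \<longrightarrow> id x \<inter> id y = {})"
  proof (rule disjoint_sub)
    fix A'' assume A'': "A'' \<subseteq> Collect sp" "small A''"
    have fy: "small y" if y: "y \<in> A''" for y
    proof -
      have "finite y" using A''(1) y unfolding sp_def by blast
      thus ?thesis by (rule small_finite)
    qed
    have "small (\<Union>y\<in>A''. y)" by (rule small_UN[OF A''(2) fy])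
    then obtain G where G: "sp G" "G \<inter> (\<Union>y\<in>A''. y) = {}" using ex[of "\<Union>y\<in>A''. y"] by blast
    have "G \<notin> A''" using G unfolding sp_def by blast
    moreover have "\<forall>y\<in>A''. id G \<inter> id y = {}" using G(2) by auto
    ultimately show "\<exists>x\<in>Collect sp - A''. \<forall>y\<in>A''. id x \<inter> id y = {}" using G(1) by blast
  qed
  then obtain GG where GG: "GG \<subseteq> Collect sp" "\<not> small GG" "\<forall>x\<in>GG. \<forall>y\<in>GG. x \<noteq> y \<longrightarrow> x \<inter> y = {}"
    unfolding id_def by blast
  define DD where "DD G = (SOME D. circuit D \<and> es \<in> D \<and> D \<subseteq> insert es (G \<union> NN (insert es G)))" for G
  have spG: "finite G" "G \<noteq> {}" "G \<subseteq> Y0 - {es}" "rho (insert es G) = rho G" if "G \<in> GG" for G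
    using GG(1) that unfolding sp_def by blast+
  have GH2: "G \<subseteq> H2" if "G \<in> GG" for G using spG(3)[OF that] Y0(1) by blast
  have DDp: "circuit (DD G) \<and> es \<in> DD G \<and> DD G \<subseteq> insert es (G \<union> NN (insert es G))" if G: "G \<in> GG" for G
  proof -
    have "\<exists>D. circuit D \<and> es \<in> D \<and> D \<subseteq> insert es (G \<union> NN (insert es G))"
      by (rule rho_circ[OF spG(1)[OF G] GH2[OF G] esH2]) (use spG(3,4)[OF G] in auto)
    thus ?thesis unfolding DD_def by (rule someI_ex)
  qed
  have esB: "es \<notin> B" using H_notB esH by blast
  have DS: "DD G \<inter> S = {}" if G: "G \<in> GG" for G
  proof -
    have "NN (insert es G) \<inter> S = {}" using NN_B[of "insert es G"] GH2[OF G] esH2 by blast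
    moreover have "G \<inter> S = {}" using G_B[OF GH2[OF G]] SB by blast
    moreover have "es \<notin> S" using esB SB by blast
    ultimately show ?thesis using DDp[OF G] by blast
  qed
  have CesS: "C es \<inter> S \<noteq> {}" using CB' esH2 Sne by blast
  have DG: "DD G \<inter> G \<noteq> {}" if G: "G \<in> GG" for G
  proof
    assume a: "DD G \<inter> G = {}"
    have "NN (insert es G) \<subseteq> B" using NN_B[of "insert es G"] GH2[OF G] esH2 by blast
    hence "DD G \<subseteq> insert es B" using DDp[OF G] a by blast
    hence "C es = DD G" using fc_eq[OF base esB] DDp[OF G] by blast
    thus False using DS[OF G] CesS by simp
  qed
  have Dsub: "DD G \<subseteq> C es \<union> (\<Union>x\<in>G. C x)" if G: "G \<in> GG" for G
  proof
    fix z assume z: "z \<in> DD G"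
    hence "z = es \<or> z \<in> G \<or> z \<in> NN (insert es G)" using DDp[OF G] by blast
    moreover have "es \<in> C es" using CH2(3)[OF esH2] .
    moreover have "\<And>x. x \<in> G \<Longrightarrow> x \<in> C x" using CH2(3) GH2[OF G] by blast
    moreover have "z \<in> NN (insert es G) \<Longrightarrow> z \<in> C es \<union> (\<Union>x\<in>G. C x)" unfolding NN_def by blast
    ultimately show "z \<in> C es \<union> (\<Union>x\<in>G. C x)" by blast
  qed
  have Dinj: "inj_on DD GG"
  proof (rule inj_onI)
    fix G1 G2 assume G: "G1 \<in> GG" "G2 \<in> GG" "DD G1 = DD G2"
    obtain y where y: "y \<in> DD G1" "y \<in> G1" using DG[OF G(1)] by blast
    have "y \<noteq> es" using y(2) spG(3)[OF G(1)] by blast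
    moreover have "y \<notin> B" using y(2) G_B[OF GH2[OF G(1)]] by blast
    moreover have "NN (insert es G2) \<subseteq> B" using NN_B[of "insert es G2"] GH2[OF G(2)] esH2 by blast
    ultimately have "y \<in> G2" using DDp[OF G(2)] y(1) G(3) by blast
    thus "G1 = G2" using GG(3) G(1,2) y(2) by blast
  qed
  have "finite ((\<lambda>G. DD G \<inter> C es) ` GG)"
  proof (rule finite_subset)
    show "(\<lambda>G. DD G \<inter> C es) ` GG \<subseteq> Pow (C es)" by blast
    show "finite (Pow (C es))" using CH2(4)[OF esH2] by simp
  qed
  then obtain T where T: "\<not> small {G\<in>GG. DD G \<inter> C es = T}" using pigeon_fin[OF GG(2)] by blast
  define GG' where "GG' = {G\<in>GG. DD G \<inter> C es = T}"
  have GG'1: "GG' \<subseteq> GG" unfolding GG'_def by blast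
  have GG'T: "\<And>G. G \<in> GG' \<Longrightarrow> DD G \<inter> C es = T" unfolding GG'_def by blast
  have nsG: "\<not> small GG'" using T unfolding GG'_def .
  have infG: "infinite GG'" using notsmall_infinite[OF nsG] .
  obtain G1 where G1: "G1 \<in> GG'" using infG infinite_imp_nonempty by blast
  obtain G2 where G2: "G2 \<in> GG' - {G1}" using infG infinite_imp_nonempty[of "GG' - {G1}"] by auto
  define Df where "Df = DD ` GG'"
  have inj': "inj_on DD GG'" using Dinj GG'1 inj_on_subset by blast
  have delta: "delta_system Df T" unfolding delta_system_def
  proof (intro conjI ballI impI)
    show "\<exists>C1\<in>Df. \<exists>C2\<in>Df. C1 \<noteq> C2"
    proof (intro bexI)
      show "DD G1 \<noteq> DD G2" using inj' G1 G2 unfolding inj_on_def by blast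
    qed (use G1 G2 in \<open>auto simp: Df_def\<close>)
    fix C1 C2 assume C12: "C1 \<in> Df" "C2 \<in> Df" "C1 \<noteq> C2"
    then obtain H1' H2' where HH: "H1' \<in> GG'" "H2' \<in> GG'" "C1 = DD H1'" "C2 = DD H2'" unfolding Df_def by blast
    have ne: "H1' \<noteq> H2'" using HH C12(3) by blast
    have dj: "H1' \<inter> H2' = {}" using GG(3) HH(1,2) GG'1 ne by blast
    have "C1 \<inter> C2 \<subseteq> T"
    proof
      fix z assume z: "z \<in> C1 \<inter> C2"
      show "z \<in> T"
      proof (cases "z \<in> C es")
        case True thus ?thesis using z HH GG'T by blast
      next
        case False
        then obtain x y where xy: "x \<in> H1'" "y \<in> H2'" "z \<in> C x" "z \<in> C y"
          using z HH Dsub GG'1 by blast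
        have "x \<in> H2" "y \<in> H2" using xy(1,2) GH2 HH(1,2) GG'1 by blast+
        moreover have "x \<noteq> y" using dj xy by blast
        ultimately have "z \<in> R" using disj xy(3,4) by blast
        hence "z \<in> C es" using RC esH2 by blast
        thus ?thesis using False by blast
      qed
    qed
    moreover have "T \<subseteq> C1 \<inter> C2" using GG'T HH by blast
    ultimately show "C1 \<inter> C2 = T" by blast
  qed
  have card1: "|GG'| =o |Df|" unfolding Df_def using card_of_ordIso inj' bij_betw_imageI by blast
  define h where "h G = (SOME x. x \<in> G)" for G :: "'a set"
  have hG: "h G \<in> G" if "G \<in> GG'" for G
  proof -
    have "G \<noteq> {}" using spG(2) GG'1 that by blast
    thus ?thesis unfolding h_def by (simp add: some_in_eq)
  qed
  have "|GG'| \<le>o |H|"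
  proof (rule card_of_ordLeqI[of h])
    show "inj_on h GG'"
    proof (rule inj_onI)
      fix x y assume xy: "x \<in> GG'" "y \<in> GG'" "h x = h y"
      hence "h x \<in> x \<inter> y" using hG[OF xy(1)] hG[OF xy(2)] by simp
      thus "x = y" using GG(3) xy(1,2) GG'1 by blast
    qed
    fix G assume "G \<in> GG'" thus "h G \<in> H" using hG GH2 GG'1 H2H by blast
  qed
  moreover have "|H| \<le>o |GG'|" using notsmall_ge[OF nsG] .
  ultimately have "|GG'| =o |H|" using ordIso_iff_ordLeq by blast
  hence card: "|Df| =o |H|" using card1 ordIso_symmetric ordIso_transitive by blast
  have circ: "\<forall>D\<in>Df. circuit D" unfolding Df_def using DDp GG'1 by blast
  have un: "\<Union>Df \<subseteq> (\<Union>e'\<in>H. C e')"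
  proof
    fix z assume "z \<in> \<Union>Df"
    then obtain G where G: "G \<in> GG'" "z \<in> DD G" unfolding Df_def by blast
    hence "z \<in> C es \<union> (\<Union>x\<in>G. C x)" using Dsub GG'1 by blast
    moreover have "G \<subseteq> H" using GH2 G(1) GG'1 H2H by blast
    ultimately show "z \<in> (\<Union>e'\<in>H. C e')" using esH by blast
  qed
  have esT: "es \<in> T" using GG'T[OF G1] DDp GG'1 G1 CH2(3)[OF esH2] by blast
  have TC: "T \<subseteq> C es - B'"
  proof
    fix z assume z: "z \<in> T"
    hence z1: "z \<in> C es" "z \<in> DD G1" using GG'T[OF G1] by blast+
    have "z \<notin> B'"
    proof
      assume "z \<in> B'"
      hence "z \<in> S" using z1(1) CB' esH2 by blast
      thus False using DS z1(2) G1 GG'1 by blast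
    qed
    thus "z \<in> C es - B'" using z1 by blast
  qed
  show ?thesis using esH delta card circ un esT TC by blast
qed

end

theorem lemma3p4:
  fixes E :: "'a set" and indep :: "'a set \<Rightarrow> bool" and B B' H :: "'a set"
  assumes M: "finitary_matroid E indep"
    and base: "is_base indep B"
    and H: "H \<subseteq> E - B"
    and unc: "uncountable H"
    and reg: "regularCard (card_of H)"
    and B'sub: "B' \<subseteq> B"
    and B'card: "(card_of B', card_of H) \<in> ordLess"
    and meet: "\<forall>e\<in>H. fund_circuit E indep e B \<inter> B' \<noteq> {}"
  shows "\<exists>e\<in>H. \<exists>D K. delta_system D K \<and> (card_of D, card_of H) \<in> ordIso \<and>
           (\<forall>C\<in>D. is_circuit E indep C) \<and>
           \<Union>D \<subseteq> (\<Union>e'\<in>H. fund_circuit E indep e' B) \<and>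
           e \<in> K \<and> K \<subseteq> fund_circuit E indep e B - B'"
proof -
  interpret c: ctx E indep H B B'
    by (unfold_locales; (rule M base H unc reg B'sub B'card meet)?)
  obtain H2 R where HR: "H2 \<subseteq> H" "\<not> c.small H2"
    "\<forall>x\<in>H2. \<forall>y\<in>H2. x \<noteq> y \<longrightarrow> c.C x \<inter> c.C y = R"
    "\<forall>x\<in>H2. R \<subseteq> c.C x" "\<forall>x\<in>H2. c.C x \<inter> B' = R \<inter> B'" "R \<inter> B' \<noteq> {}"
    using c.stepB by blast
  interpret c2: ctx2 E indep H B B' H2 R
    by (unfold_locales; (rule HR)?)
  show ?thesis using c2.final .
qed

end
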